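(* Let $N=\{1,2,\dots,n\}$ be a set of players and let $v:2^N\to\mathbb{R}$ be a monotonic characteristic function with $v(\emptyset)=0$, the grand coalition having value $v(N)$. Let $x=(x_1,\dots,x_n)$ be a payoff vector, where the players are indexed so that $x_1\le x_2\le\dots\le x_n$, and let $(\phi_1,\dots,\phi_n)$ be the Shapley values of the players with the same indices; assume $\phi_n>0$. Then $x$ is both stable and proportional if and only if for every $i\in\{1,\dots,n\}$, $$x_i=\phi_i\,\frac{v(N)}{\phi_n}\qquad\text{and}\qquad \phi_i\,\frac{v(N)}{\phi_n}\;\ge\; v(\{1,2,\dots,i\}).$$
   Context: A characteristic function $v:2^N\to\mathbb{R}$ assigns a value $v(C)$ to each coalition $C\subseteq N$; it is monotonic if $C\subseteq C'$ implies $v(C)\le v(C')$. When the grand coalition $N$ forms, a payoff vector is a vector $x=(x_1,\dots,x_n)\in\mathbb{R}^n$ with $x_i\le v(N)$ for every player $i$ (each player individually receives at most $v(N)$; the sum of payoffs is not restricted). A payoff vector $x$ is stable if for every nonempty coalition $C\subseteq N$ there exists $k\in C$ with $x_k\ge v(C)$. The Shapley value of player $i$ is $$\phi_i=\sum_{S\subseteq N\setminus\{i\}}\frac{|S|!\,(n-|S|-1)!}{n!}\big(v(S\cup\{i\})-v(S)\big).$$ A payoff vector $x$ is proportional if there exists a constant $\alpha>0$ with $x_i=\alpha\phi_i$ for all $i$. *)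

theory Defs
  imports Complex_Main
begin

text \<open>Players are N = {1..n}; a characteristic function is v :: nat set \<Rightarrow> real
  (only its values on subsets of N matter). Payoff vectors are x :: nat \<Rightarrow> real
  (only the values at players in N matter).\<close>

definition monotonic_game :: "nat set \<Rightarrow> (nat set \<Rightarrow> real) \<Rightarrow> bool" where
  "monotonic_game N v \<longleftrightarrow> (\<forall>C C'. C \<subseteq> C' \<and> C' \<subseteq> N \<longrightarrow> v C \<le> v C')"

definition payoff_vector :: "nat set \<Rightarrow> (nat set \<Rightarrow> real) \<Rightarrow> (nat \<Rightarrow> real) \<Rightarrow> bool" where
  "payoff_vector N v x \<longleftrightarrow> (\<forall>i\<in>N. x i \<le> v N)"

definition stable :: "nat set \<Rightarrow> (nat set \<Rightarrow> real) \<Rightarrow> (nat \<Rightarrow> real) \<Rightarrow> bool" where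
  "stable N v x \<longleftrightarrow> (\<forall>C. C \<subseteq> N \<and> C \<noteq> {} \<longrightarrow> (\<exists>k\<in>C. x k \<ge> v C))"

definition shapley :: "nat set \<Rightarrow> (nat set \<Rightarrow> real) \<Rightarrow> nat \<Rightarrow> real" where
  "shapley N v i = (\<Sum>S\<in>Pow (N - {i}).
      (fact (card S) * fact (card N - card S - 1) / fact (card N)) * (v (S \<union> {i}) - v S))"

definition proportional :: "nat set \<Rightarrow> (nat set \<Rightarrow> real) \<Rightarrow> (nat \<Rightarrow> real) \<Rightarrow> bool" where
  "proportional N v x \<longleftrightarrow> (\<exists>\<alpha>>0. \<forall>i\<in>N. x i = \<alpha> * shapley N v i)"

end

theory Submission
  imports Defs
begin

theorem theorem6:
  fixes n :: nat and v :: "nat set \<Rightarrow> real" and x :: "nat \<Rightarrow> real"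
  assumes n: "n \<ge> 1"
    and mono: "monotonic_game {1..n} v"
    and empty: "v {} = 0"
    and payoff: "payoff_vector {1..n} v x"
    and sorted: "\<And>i j. 1 \<le> i \<Longrightarrow> i \<le> j \<Longrightarrow> j \<le> n \<Longrightarrow> x i \<le> x j"
    and phin: "shapley {1..n} v n > 0"
  shows "(stable {1..n} v x \<and> proportional {1..n} v x) \<longleftrightarrow>
    (\<forall>i\<in>{1..n}. x i = shapley {1..n} v i * (v {1..n} / shapley {1..n} v n)
       \<and> shapley {1..n} v i * (v {1..n} / shapley {1..n} v n) \<ge> v {1..i})"
proof
  assume H: "stable {1..n} v x \<and> proportional {1..n} v x"
  then obtain a where a: "a > 0" "\<And>i. i \<in> {1..n} \<Longrightarrow> x i = a * shapley {1..n} v i"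
    unfolding proportional_def by blast
  have nN: "n \<in> {1..n}" using n by simp
  obtain k where k: "k \<in> {1..n}" "x k \<ge> v {1..n}"
    using H nN unfolding stable_def by (metis empty_iff subset_refl)
  have "x k \<le> x n" using sorted k(1) by auto
  moreover have "x n \<le> v {1..n}" using payoff nN unfolding payoff_vector_def by auto
  ultimately have xn: "x n = v {1..n}" using k by linarith
  hence aeq: "a = v {1..n} / shapley {1..n} v n" using a(2)[OF nN] phin by (auto simp: field_simps)
  show "\<forall>i\<in>{1..n}. x i = shapley {1..n} v i * (v {1..n} / shapley {1..n} v n)
       \<and> shapley {1..n} v i * (v {1..n} / shapley {1..n} v n) \<ge> v {1..i}"
  proof
    fix i assume i: "i \<in> {1..n}"
    have xi: "x i = shapley {1..n} v i * (v {1..n} / shapley {1..n} v n)"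
      using a(2)[OF i] aeq by simp
    obtain j where j: "j \<in> {1..i}" "x j \<ge> v {1..i}"
      using H i unfolding stable_def by (metis atLeastAtMost_iff atLeastatMost_empty_iff2 atLeastatMost_subset_iff order_refl)
    have "x j \<le> x i" using sorted j(1) i by auto
    with j xi show "x i = shapley {1..n} v i * (v {1..n} / shapley {1..n} v n)
       \<and> shapley {1..n} v i * (v {1..n} / shapley {1..n} v n) \<ge> v {1..i}" by simp
  qed
next
  assume H: "\<forall>i\<in>{1..n}. x i = shapley {1..n} v i * (v {1..n} / shapley {1..n} v n)
       \<and> shapley {1..n} v i * (v {1..n} / shapley {1..n} v n) \<ge> v {1..i}"
  have st: "stable {1..n} v x"
    unfolding stable_def
  proof (intro allI impI)
    fix C assume C: "C \<subseteq> {1..n} \<and> C \<noteq> {}"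
    have fin: "finite C" using C finite_subset by blast
    define m where "m = Max C"
    have mC: "m \<in> C" using C fin m_def by simp
    have sub: "C \<subseteq> {1..m}" using C fin m_def by auto
    have mN: "m \<in> {1..n}" using mC C by auto
    have "v C \<le> v {1..m}" using mono sub mN unfolding monotonic_game_def by auto
    also have "\<dots> \<le> x m" using H mN by auto
    finally show "\<exists>k\<in>C. v C \<le> x k" using mC by blast
  qed
  have vpos: "v {1..n} > 0"
  proof (rule ccontr)
    assume "\<not> v {1..n} > 0"
    moreover have "v {1..n} \<ge> 0" using mono empty unfolding monotonic_game_def by force
    ultimately have z: "v {1..n} = 0" by simp
    have allz: "\<And>S. S \<subseteq> {1..n} \<Longrightarrow> v S = 0"
    proof -
      fix S :: "nat set" assume "S \<subseteq> {1..n}"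
      hence "v {} \<le> v S" "v S \<le> v {1..n}" using mono unfolding monotonic_game_def by auto
      thus "v S = 0" using z empty by simp
    qed
    have "shapley {1..n} v n = 0" unfolding shapley_def
    proof (rule sum.neutral, rule ballI)
      fix S assume "S \<in> Pow ({1..n} - {n})"
      hence "S \<subseteq> {1..n}" "S \<union> {n} \<subseteq> {1..n}" using n by auto
      thus "fact (card S) * fact (card {1..n} - card S - 1) / fact (card {1..n}) * (v (S \<union> {n}) - v S) = (0::real)"
        using allz by simp
    qed
    thus False using phin by simp
  qed
  have "proportional {1..n} v x"
    unfolding proportional_def
    using H vpos phin by (intro exI[of _ "v {1..n} / shapley {1..n} v n"]) auto
  with st show "stable {1..n} v x \<and> proportional {1..n} v x" by simp
qed

end
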